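(* Assume (A1) and (A2) below. Then for any $s\in\mathcal S$ and policy $\pi$, $$\sum_{a,s'}\mathbb{E}_{p\sim\Phi_t}\big[p(a,s'\mid s)V^{\pi,p}(s')\big]=\sum_{a,s'}\bar p_t(a,s'\mid s)\,\mathbb{E}_{p\sim\Phi_t}\big[V^{\pi,p}(s')\big].$$
   Context: Let $\mathcal S$ be a finite state space, $\mathcal A$ a finite action space, $r:\mathcal S\times\mathcal A\to\mathbb R$ a known bounded (deterministic) reward function and $\gamma\in[0,1)$ a discount factor. A transition function $p$ assigns to each $(s,a)$ a probability distribution $p(\cdot\mid s,a)$ on $\mathcal S$. A policy $\pi$ gives distributions $\pi(\cdot\mid s)$ on $\mathcal A$; write $p(a,s'\mid s)=\pi(a\mid s)p(s'\mid s,a)$. For a transition function $p$, the value function is $V^{\pi,p}(s)=\mathbb E\big[\sum_{h\ge 0}\gamma^h r(s_h,a_h)\mid s_0=s\big]$ with $a_h\sim\pi(\cdot\mid s_h)$, $s_{h+1}\sim p(\cdot\mid s_h,a_h)$. The transition function $p$ is a random variable with distribution $\Phi_t$; $\bar p_t(s'\mid s,a)=\mathbb E_{p\sim\Phi_t}[p(s'\mid s,a)]$ and $\bar p_t(a,s'\mid s)=\pi(a\mid s)\bar p_t(s'\mid s,a)$. Assumptions: (A1) (independent transitions) $p(s'\mid x,a)$ and $p(s'\mid y,a)$ are independent random variables if $x\neq y$; (A2) (acyclic MDP) the MDP is a directed acyclic graph, i.e., states are not visited more than once in any given episode. *)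

theory Defs
  imports "HOL-Probability.Probability"
begin

text \<open>Conventions: a transition function is p :: 's => 'a => 's => real with
  p x a y = p(y | x, a); a policy is pi :: 's => 'a => real with pi x a = pi(a | x).\<close>

text \<open>Distribution of the state at step h, started at s, under policy pi and
  transition function p (sub-stochastic: missing mass = episode has ended).\<close>
primrec state_dist ::
  "('s::finite \<Rightarrow> 'a::finite \<Rightarrow> real) \<Rightarrow> ('s \<Rightarrow> 'a \<Rightarrow> 's \<Rightarrow> real) \<Rightarrow> 's \<Rightarrow> nat \<Rightarrow> 's \<Rightarrow> real"
where
  "state_dist \<pi> p s 0 = (\<lambda>x. if x = s then 1 else 0)"
| "state_dist \<pi> p s (Suc h) =
     (\<lambda>y. \<Sum>x\<in>UNIV. state_dist \<pi> p s h x * (\<Sum>a\<in>UNIV. \<pi> x a * p x a y))"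

definition value_fun ::
  "real \<Rightarrow> ('s::finite \<Rightarrow> 'a::finite \<Rightarrow> real) \<Rightarrow> ('s \<Rightarrow> 'a \<Rightarrow> real) \<Rightarrow> ('s \<Rightarrow> 'a \<Rightarrow> 's \<Rightarrow> real) \<Rightarrow> 's \<Rightarrow> real"
where
  "value_fun \<gamma> r \<pi> p s =
     (\<Sum>h. \<gamma> ^ h * (\<Sum>x\<in>UNIV. state_dist \<pi> p s h x * (\<Sum>a\<in>UNIV. \<pi> x a * r x a)))"

definition mean_trans :: "'w measure \<Rightarrow> ('w \<Rightarrow> 's \<Rightarrow> 'a \<Rightarrow> 's \<Rightarrow> real) \<Rightarrow> 's \<Rightarrow> 'a \<Rightarrow> 's \<Rightarrow> real"
where
  "mean_trans M P x a y = (\<integral>\<omega>. P \<omega> x a y \<partial>M)"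

end

theory Submission
  imports Defs
begin

lemma sd_meas:
  assumes "\<And>x a z. (\<lambda>\<omega>. p \<omega> x a z) \<in> borel_measurable N"
  shows "(\<lambda>\<omega>. state_dist \<pi> (p \<omega>) y h z) \<in> borel_measurable N"
  using assms by (induction h arbitrary: z) auto

lemma vf_meas:
  assumes "\<And>x a z. (\<lambda>\<omega>. p \<omega> x a z) \<in> borel_measurable N"
  shows "(\<lambda>\<omega>. value_fun \<gamma> r \<pi> (p \<omega>) y) \<in> borel_measurable N"
  unfolding value_fun_def using sd_meas[OF assms] by measurable

lemma sd_local:
  assumes "\<forall>x\<in>R. p x = p' x" "y \<in> R" "\<forall>x a z. x \<in> R \<longrightarrow> p x a z \<noteq> 0 \<longrightarrow> z \<in> R"
  shows "state_dist \<pi> p y h = state_dist \<pi> p' y h \<and> (\<forall>z. state_dist \<pi> p y h z \<noteq> 0 \<longrightarrow> z \<in> R)"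
proof (induction h)
  case 0
  show ?case using assms(2) by simp
next
  case (Suc h)
  have IH1: "state_dist \<pi> p y h = state_dist \<pi> p' y h" and IH2: "\<And>z. state_dist \<pi> p y h z \<noteq> 0 \<Longrightarrow> z \<in> R"
    using Suc by blast+
  have eq: "state_dist \<pi> p y (Suc h) z = state_dist \<pi> p' y (Suc h) z" for z
  proof -
    have "state_dist \<pi> p y h x * (\<Sum>a\<in>UNIV. \<pi> x a * p x a z) = state_dist \<pi> p' y h x * (\<Sum>a\<in>UNIV. \<pi> x a * p' x a z)" for x
    proof (cases "x \<in> R")
      case True
      then have "p x = p' x" using assms(1) by blast
      then show ?thesis using IH1 by simp
    next
      case False
      then have "state_dist \<pi> p y h x = 0" using IH2 by blast
      then show ?thesis using IH1 by simp
    qed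
    then show ?thesis by simp
  qed
  have supp: "z \<in> R" if "state_dist \<pi> p y (Suc h) z \<noteq> 0" for z
  proof -
    have "(\<Sum>x\<in>UNIV. state_dist \<pi> p y h x * (\<Sum>a\<in>UNIV. \<pi> x a * p x a z)) \<noteq> 0"
      using that by simp
    then obtain x where x: "state_dist \<pi> p y h x * (\<Sum>a\<in>UNIV. \<pi> x a * p x a z) \<noteq> 0"
      using sum.not_neutral_contains_not_neutral by blast
    then have xR: "x \<in> R" using IH2 by force
    from x have "(\<Sum>a\<in>UNIV. \<pi> x a * p x a z) \<noteq> 0" by force
    then obtain a where "\<pi> x a * p x a z \<noteq> 0"
      using sum.not_neutral_contains_not_neutral by blast
    then have "p x a z \<noteq> 0" by force
    then show ?thesis using assms(3) xR by blast
  qed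
  show ?case using eq supp by blast
qed

lemma sd_bounds:
  fixes \<pi> :: "'s::finite \<Rightarrow> 'a::finite \<Rightarrow> real"
  assumes "\<forall>x a y. 0 \<le> p x a y" "\<forall>x a. (\<Sum>y\<in>UNIV. p x a y) \<le> 1"
    "\<forall>x a. 0 \<le> \<pi> x a" "\<forall>x. (\<Sum>a\<in>UNIV. \<pi> x a) = 1"
  shows "(\<forall>z. 0 \<le> state_dist \<pi> p y h z) \<and> (\<Sum>z\<in>UNIV. state_dist \<pi> p y h z) \<le> 1"
proof (induction h)
  case 0
  then show ?case by simp
next
  case (Suc h)
  have IH1: "\<And>z. 0 \<le> state_dist \<pi> p y h z" and IH2: "(\<Sum>z\<in>UNIV. state_dist \<pi> p y h z) \<le> 1"
    using Suc by blast+
  have nn: "0 \<le> state_dist \<pi> p y (Suc h) z" for z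
    unfolding state_dist.simps
    by (intro sum_nonneg mult_nonneg_nonneg) (use IH1 assms(1,3) in blast)+
  have "(\<Sum>z\<in>UNIV. state_dist \<pi> p y (Suc h) z)
      = (\<Sum>z\<in>UNIV. \<Sum>x\<in>UNIV. state_dist \<pi> p y h x * (\<Sum>a\<in>UNIV. \<pi> x a * p x a z))"
    by simp
  also have "\<dots> = (\<Sum>x\<in>UNIV. \<Sum>z\<in>UNIV. state_dist \<pi> p y h x * (\<Sum>a\<in>UNIV. \<pi> x a * p x a z))"
    by (rule sum.swap)
  also have "\<dots> = (\<Sum>x\<in>UNIV. state_dist \<pi> p y h x * (\<Sum>a\<in>UNIV. \<pi> x a * (\<Sum>z\<in>UNIV. p x a z)))"
  proof (rule sum.cong[OF refl])
    fix x
    have "(\<Sum>z\<in>UNIV. state_dist \<pi> p y h x * (\<Sum>a\<in>UNIV. \<pi> x a * p x a z))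
        = state_dist \<pi> p y h x * (\<Sum>z\<in>UNIV. \<Sum>a\<in>UNIV. \<pi> x a * p x a z)"
      by (rule sum_distrib_left[symmetric])
    also have "(\<Sum>z\<in>UNIV. \<Sum>a\<in>UNIV. \<pi> x a * p x a z) = (\<Sum>a\<in>UNIV. \<Sum>z\<in>UNIV. \<pi> x a * p x a z)"
      by (rule sum.swap)
    also have "\<dots> = (\<Sum>a\<in>UNIV. \<pi> x a * (\<Sum>z\<in>UNIV. p x a z))"
      by (simp only: sum_distrib_left)
    finally show "(\<Sum>z\<in>UNIV. state_dist \<pi> p y h x * (\<Sum>a\<in>UNIV. \<pi> x a * p x a z))
        = state_dist \<pi> p y h x * (\<Sum>a\<in>UNIV. \<pi> x a * (\<Sum>z\<in>UNIV. p x a z))" .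
  qed
  also have "\<dots> \<le> (\<Sum>x\<in>UNIV. state_dist \<pi> p y h x * (\<Sum>a\<in>UNIV. \<pi> x a))"
  proof (intro sum_mono mult_left_mono)
    fix x a
    show "\<pi> x a * sum (p x a) UNIV \<le> \<pi> x a"
      using assms(2,3) by (simp add: mult_left_le)
    show "0 \<le> state_dist \<pi> p y h x" by (rule IH1)
  qed
  also have "\<dots> \<le> 1" using IH2 assms(4) by simp
  finally show ?case using nn by blast
qed

lemma vf_bound:
  fixes \<pi> :: "'s::finite \<Rightarrow> 'a::finite \<Rightarrow> real"
  assumes "\<forall>x a y. 0 \<le> p x a y" "\<forall>x a. (\<Sum>y\<in>UNIV. p x a y) \<le> 1"
    "\<forall>x a. 0 \<le> \<pi> x a" "\<forall>x. (\<Sum>a\<in>UNIV. \<pi> x a) = 1" "0 \<le> \<gamma>" "\<gamma> < 1"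
  shows "\<bar>value_fun \<gamma> r \<pi> p y\<bar> \<le> (\<Sum>h. \<gamma> ^ h * (\<Sum>x\<in>UNIV. \<Sum>a\<in>UNIV. \<bar>r x a\<bar>))"
proof -
  define B where "B = (\<Sum>x\<in>UNIV. \<Sum>a\<in>UNIV. \<bar>r x a\<bar>)"
  define f where "f h = \<gamma> ^ h * (\<Sum>x\<in>UNIV. state_dist \<pi> p y h x * (\<Sum>a\<in>UNIV. \<pi> x a * r x a))" for h
  have pi1: "\<pi> x a \<le> 1" for x a
  proof -
    have "\<pi> x a \<le> (\<Sum>a\<in>UNIV. \<pi> x a)"
      using assms(3) by (intro member_le_sum) auto
    then show ?thesis using assms(4) by simp
  qed
  have inner: "\<bar>\<Sum>a\<in>UNIV. \<pi> x a * r x a\<bar> \<le> B" for x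
  proof -
    have "\<bar>\<Sum>a\<in>UNIV. \<pi> x a * r x a\<bar> \<le> (\<Sum>a\<in>UNIV. \<bar>\<pi> x a * r x a\<bar>)" by (rule sum_abs)
    also have "\<dots> \<le> (\<Sum>a\<in>UNIV. \<bar>r x a\<bar>)"
      using assms(3) pi1 by (intro sum_mono) (auto simp: abs_mult intro!: mult_left_le_one_le)
    also have "\<dots> \<le> B" unfolding B_def
      by (intro member_le_sum[where f="\<lambda>x. \<Sum>a\<in>UNIV. \<bar>r x a\<bar>"]) (auto intro: sum_nonneg)
    finally show ?thesis .
  qed
  have fb: "norm (f h) \<le> \<gamma> ^ h * B" for h
  proof -
    have sb: "(\<forall>z. 0 \<le> state_dist \<pi> p y h z) \<and> (\<Sum>z\<in>UNIV. state_dist \<pi> p y h z) \<le> 1"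
      using sd_bounds[OF assms(1-4)] by blast
    have B0: "0 \<le> B" unfolding B_def by (auto intro: sum_nonneg)
    have "\<bar>\<Sum>x\<in>UNIV. state_dist \<pi> p y h x * (\<Sum>a\<in>UNIV. \<pi> x a * r x a)\<bar>
        \<le> (\<Sum>x\<in>UNIV. state_dist \<pi> p y h x * B)"
      using sb inner by (intro order.trans[OF sum_abs] sum_mono) (auto simp: abs_mult intro!: mult_left_mono)
    also have "\<dots> = (\<Sum>x\<in>UNIV. state_dist \<pi> p y h x) * B" by (simp add: sum_distrib_right)
    also have "\<dots> \<le> B" using sb B0 by (intro mult_left_le_one_le) (auto intro: sum_nonneg)
    finally show ?thesis unfolding f_def using assms(5)
      by (simp add: abs_mult mult_left_mono)
  qed
  have sg: "summable (\<lambda>h. \<gamma> ^ h * B)"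
    using assms(5,6) by (intro summable_mult2 summable_geometric) simp
  have sn: "summable (\<lambda>h. norm (f h))"
    by (rule summable_comparison_test'[OF sg]) (use fb in simp)
  have "\<bar>value_fun \<gamma> r \<pi> p y\<bar> = norm (suminf f)" unfolding value_fun_def f_def by simp
  also have "\<dots> \<le> (\<Sum>h. norm (f h))" by (rule summable_norm[OF sn])
  also have "\<dots> \<le> (\<Sum>h. \<gamma> ^ h * B)" by (rule suminf_le[OF fb sn sg])
  finally show ?thesis unfolding B_def .
qed


theorem lemma3:
  fixes M :: "'w measure"
    and P :: "'w \<Rightarrow> 's::finite \<Rightarrow> 'a::finite \<Rightarrow> 's \<Rightarrow> real"
    and r :: "'s \<Rightarrow> 'a \<Rightarrow> real"
    and \<pi> :: "'s \<Rightarrow> 'a \<Rightarrow> real"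
    and \<gamma> :: real
    and E :: "('s \<times> 's) set"
    and s :: 's
  assumes Phi: "prob_space M"
    and gamma: "0 \<le> \<gamma>" "\<gamma> < 1"
    and trans_nonneg: "\<forall>\<omega>\<in>space M. \<forall>x a y. 0 \<le> P \<omega> x a y"
    and trans_sum: "\<forall>\<omega>\<in>space M. \<forall>x a. (\<Sum>y\<in>UNIV. P \<omega> x a y) \<le> 1"
    and A1: "prob_space.indep_vars M (\<lambda>_. PiM UNIV (\<lambda>_. borel))
               (\<lambda>x \<omega>. (\<lambda>(a, y). P \<omega> x a y)) UNIV"
    and A2: "acyclic E" "\<forall>\<omega>\<in>space M. \<forall>x a y. 0 < P \<omega> x a y \<longrightarrow> (x, y) \<in> E"
    and policy: "\<forall>x a. 0 \<le> \<pi> x a" "\<forall>x. (\<Sum>a\<in>UNIV. \<pi> x a) = 1"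
  shows "(\<Sum>a\<in>UNIV. \<Sum>y\<in>UNIV.
            (\<integral>\<omega>. (\<pi> s a * P \<omega> s a y) * value_fun \<gamma> r \<pi> (P \<omega>) y \<partial>M))
       = (\<Sum>a\<in>UNIV. \<Sum>y\<in>UNIV.
            (\<pi> s a * mean_trans M P s a y) * (\<integral>\<omega>. value_fun \<gamma> r \<pi> (P \<omega>) y \<partial>M))"
  proof -
  interpret prob_space M by (rule Phi)
  let ?M' = "\<lambda>_::'s. PiM (UNIV::('a \<times> 's) set) (\<lambda>_. (borel::real measure))"
  let ?X = "\<lambda>x \<omega>. (\<lambda>(a, y). P \<omega> x a y)"
  have rv: "?X x \<in> measurable M (?M' x)" for x
    using A1 unfolding indep_vars_def by blast
  have Pm: "(\<lambda>\<omega>. P \<omega> x a z) \<in> borel_measurable M" for x a z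
  proof -
    have "(\<lambda>f. f (a, z)) \<circ> ?X x \<in> borel_measurable M"
      by (rule measurable_comp[OF rv]) simp
    then show ?thesis by (simp add: comp_def)
  qed
  have Pb: "\<bar>P \<omega> x a z\<bar> \<le> 1" if "\<omega> \<in> space M" for \<omega> x a z
  proof -
    have "P \<omega> x a z \<le> (\<Sum>y\<in>UNIV. P \<omega> x a y)"
      using trans_nonneg that by (intro member_le_sum) auto
    moreover have "(\<Sum>y\<in>UNIV. P \<omega> x a y) \<le> 1" "0 \<le> P \<omega> x a z"
      using trans_sum trans_nonneg that by auto
    ultimately show ?thesis by linarith
  qed
  have Pint: "integrable M (\<lambda>\<omega>. P \<omega> x a z)" for x a z
    by (rule integrable_const_bound[where B=1]) (use Pb Pm in auto)
  define C where "C = (\<Sum>h. \<gamma> ^ h * (\<Sum>x\<in>UNIV. \<Sum>a\<in>UNIV. \<bar>r x a\<bar>))"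
  have Vb: "\<bar>value_fun \<gamma> r \<pi> (P \<omega>) y\<bar> \<le> C" if "\<omega> \<in> space M" for \<omega> y
    unfolding C_def using that trans_nonneg trans_sum policy gamma
    by (intro vf_bound) auto
  have trm: "(\<integral>\<omega>. (\<pi> s a * P \<omega> s a y) * value_fun \<gamma> r \<pi> (P \<omega>) y \<partial>M)
     = (\<pi> s a * mean_trans M P s a y) * (\<integral>\<omega>. value_fun \<gamma> r \<pi> (P \<omega>) y \<partial>M)" for a y
  proof (cases "(s, y) \<in> E")
    case False
    have z: "P \<omega> s a y = 0" if "\<omega> \<in> space M" for \<omega>
    proof -
      have "0 \<le> P \<omega> s a y" using trans_nonneg that by blast
      moreover have "\<not> 0 < P \<omega> s a y" using A2(2) that False by blast
      ultimately show ?thesis by linarith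
    qed
    have "(\<integral>\<omega>. (\<pi> s a * P \<omega> s a y) * value_fun \<gamma> r \<pi> (P \<omega>) y \<partial>M) = (\<integral>\<omega>. 0 \<partial>M)"
      by (rule Bochner_Integration.integral_cong[OF refl]) (auto simp: z)
    moreover have "mean_trans M P s a y = (\<integral>\<omega>. 0 \<partial>M)"
      unfolding mean_trans_def by (rule Bochner_Integration.integral_cong[OF refl]) (auto simp: z)
    ultimately show ?thesis by simp
  next
    case True
    define R where "R = {x. (y, x) \<in> E\<^sup>*}"
    have sR: "s \<notin> R"
    proof
      assume "s \<in> R"
      then have "(s, s) \<in> E\<^sup>+" using True unfolding R_def
        by (simp add: rtrancl_into_trancl2)
      then show False using A2(1) unfolding acyclic_def by blast
    qed
    define G where "G q = value_fun \<gamma> r \<pi> (\<lambda>x a z. if x \<in> R then q x (a, z) else 0) y"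
      for q :: "'s \<Rightarrow> 'a \<times> 's \<Rightarrow> real"
    have Gm: "G \<in> borel_measurable (PiM R ?M')"
      unfolding G_def
    proof (rule vf_meas)
      fix x a z
      show "(\<lambda>q. if x \<in> R then q x (a, z) else 0) \<in> borel_measurable (PiM R ?M')"
      proof (cases "x \<in> R")
        case True
        have "(\<lambda>f. f (a, z)) \<circ> (\<lambda>q. q x) \<in> borel_measurable (PiM R ?M')"
          by (rule measurable_comp[OF measurable_component_singleton[OF True]]) simp
        then show ?thesis using True by (simp add: comp_def)
      qed simp
    qed
    have Y1m: "(\<lambda>f. f s (a, y)) \<in> borel_measurable (PiM {s} ?M')"
    proof -
      have "(\<lambda>f. f (a, y)) \<circ> (\<lambda>q. q s) \<in> borel_measurable (PiM {s} ?M')"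
        by (rule measurable_comp[OF measurable_component_singleton]) simp_all
      then show ?thesis by (simp add: comp_def)
    qed
    have ind: "indep_var borel ((\<lambda>f. f s (a, y)) \<circ> (\<lambda>\<omega>. restrict (\<lambda>i. ?X i \<omega>) {s}))
                 borel (G \<circ> (\<lambda>\<omega>. restrict (\<lambda>i. ?X i \<omega>) R))"
      by (rule indep_var_compose[OF indep_var_restrict[OF A1] Y1m Gm]) (use sR in auto)
    have e1: "(\<lambda>f. f s (a, y)) \<circ> (\<lambda>\<omega>. restrict (\<lambda>i. ?X i \<omega>) {s}) = (\<lambda>\<omega>. P \<omega> s a y)"
      by (simp add: comp_def)
    define V where "V = G \<circ> (\<lambda>\<omega>. restrict (\<lambda>i. ?X i \<omega>) R)"
    have ind2: "indep_var borel (\<lambda>\<omega>. P \<omega> s a y) borel V"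
      using ind unfolding e1 V_def .
    have Veq: "V \<omega> = value_fun \<gamma> r \<pi> (P \<omega>) y" if "\<omega> \<in> space M" for \<omega>
    proof -
      let ?p' = "\<lambda>x a z. if x \<in> R then restrict (\<lambda>i. ?X i \<omega>) R x (a, z) else 0"
      have "state_dist \<pi> (P \<omega>) y h = state_dist \<pi> ?p' y h" for h
      proof (rule conjunct1[OF sd_local])
        show "\<forall>x\<in>R. P \<omega> x = ?p' x" by auto
        show "y \<in> R" unfolding R_def by simp
        show "\<forall>x a z. x \<in> R \<longrightarrow> P \<omega> x a z \<noteq> 0 \<longrightarrow> z \<in> R"
        proof (intro allI impI)
          fix x a z assume "x \<in> R" "P \<omega> x a z \<noteq> 0"
          moreover have "0 \<le> P \<omega> x a z" using trans_nonneg that by blast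
          ultimately have "0 < P \<omega> x a z" by linarith
          then have "(x, z) \<in> E" using A2(2) that by blast
          then show "z \<in> R" using \<open>x \<in> R\<close> unfolding R_def by (simp add: rtrancl_into_rtrancl)
        qed
      qed
      then show ?thesis unfolding V_def G_def value_fun_def by simp
    qed
    have Vm: "V \<in> borel_measurable M"
      using ind2 unfolding indep_var_def indep_vars_def by (auto split: bool.splits)
    have Vint: "integrable M V"
      by (rule integrable_const_bound[where B=C]) (use Veq Vb Vm in auto)
    have "(\<integral>\<omega>. (\<pi> s a * P \<omega> s a y) * value_fun \<gamma> r \<pi> (P \<omega>) y \<partial>M)
        = (\<integral>\<omega>. \<pi> s a * (P \<omega> s a y * V \<omega>) \<partial>M)"
      by (rule Bochner_Integration.integral_cong[OF refl]) (auto simp: Veq)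
    also have "\<dots> = \<pi> s a * (\<integral>\<omega>. P \<omega> s a y * V \<omega> \<partial>M)" by simp
    also have "\<dots> = \<pi> s a * ((\<integral>\<omega>. P \<omega> s a y \<partial>M) * (\<integral>\<omega>. V \<omega> \<partial>M))"
      by (simp add: indep_var_lebesgue_integral[OF ind2 Pint Vint])
    also have "(\<integral>\<omega>. V \<omega> \<partial>M) = (\<integral>\<omega>. value_fun \<gamma> r \<pi> (P \<omega>) y \<partial>M)"
      by (rule Bochner_Integration.integral_cong[OF refl]) (auto simp: Veq)
    finally show ?thesis unfolding mean_trans_def by simp
  qed
  show ?thesis by (simp add: trm)
qed

end
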